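(* Consider a quantum data-syndrome code with $n$ qubits and $m$ measurement bits, set $N=2n+m$, and consider noise described by a set of channel supports $\Gamma\subseteq 2^{[N]}$ with channel distributions $(P_\gamma)_{\gamma\in\Gamma}$ and total error distribution $P$. Assume that for all $\gamma_1,\gamma_2\in\Gamma$ one has $\gamma_1\cup\gamma_2\in\Delta^{D}$, and assume $P_\gamma(0)>\tfrac12$ for all $\gamma\in\Gamma$. Then the total error distribution $P$ is identifiable from the syndrome statistics: if $(P'_\gamma)_{\gamma\in\Gamma}$ is any other family of channel distributions for the same $\Gamma$ with $P'_\gamma(0)>\tfrac12$ for all $\gamma$, whose total error distribution $P'$ induces the same distribution of syndromes as $P$, then $P'=P$.
   Context: Phase space representation: a Pauli operator on $n$ qubits (modulo phases) $X^{x_1}Z^{z_1}\otimes\cdots\otimes X^{x_n}Z^{z_n}$ is identified with $(x_1,\dots,x_n,z_1,\dots,z_n)\in\mathbb F_2^{2n}$. For $v=(x,z)\in\mathbb F_2^{2n}$ write $\overline v=(z,x)$ (swap of $X$- and $Z$-bits); two Pauli vectors $u,v$ commute iff $\overline u\cdot v=0$ (mod 2). A quantum data-syndrome code is given by pairwise commuting stabilizer generators $g^{(1)},\dots,g^{(l)}\in\mathbb F_2^{2n}$ (generating a stabilizer group not containing $-I$) and a classical code with generator matrix $G_C=[I_l\ A]\in\mathbb F_2^{l\times m}$, $A\in\mathbb F_2^{l\times(m-l)}$; for $i\in[m]$ let $f^{(i)}=\sum_{j=1}^l (G_C)_{j,i}\,g^{(j)}\in\mathbb F_2^{2n}$ (so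 $f^{(i)}=g^{(i)}$ for $i\le l$). Errors are vectors $e=(e_d,e_m)\in\mathbb F_2^{2n}\times\mathbb F_2^m=\mathbb F_2^N$, and the syndrome of $e$ is $\mathrm{syn}(e)\in\mathbb F_2^m$ with $\mathrm{syn}(e)_i=f^{(i)}\cdot\overline{e_d}+(e_m)_i$ (mod 2). Vectors in $\mathbb F_2^N$ are identified with their support sets in $[N]$. A noise model consists of a set $\Gamma\subseteq 2^{[N]}$ and, for each $\gamma\in\Gamma$, a probability distribution $P_\gamma$ on $\mathbb F_2^N$ with $P_\gamma(e)=0$ unless $\mathrm{supp}(e)\subseteq\gamma$; the total error distribution $P$ is the distribution of $\sum_{\gamma\in\Gamma}e_\gamma$ (sum in $\mathbb F_2^N$) where the $e_\gamma\sim P_\gamma$ are independent (the Boolean convolution of the $P_\gamma$). The syndrome statistics is the distribution of $\mathrm{syn}(e)$ for $e\sim P$. Define $\Delta^{D}=\{\gamma\subseteq[N]: \mathrm{syn}(e)\neq 0 \text{ for all nonzero } e\in\mathbb F_2^N \text{ with } \mathrm{supp}(e)\subseteq\gamma\}$. *)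

theory Defs
  imports Complex_Main "HOL-Library.FuncSet"
begin

(* Conventions: F_2-vectors are represented by their support sets of (0-based) indices.
   Pauli vector in F_2^{2n}: indices 0..n-1 are the X-bits, n..2n-1 the Z-bits.
   Error vector in F_2^N, N = 2n+m: indices 0..2n-1 data part e_d, index 2n+i is (e_m)_i.
   Vector addition in F_2 is symmetric difference. *)

definition swapXZ :: "nat \<Rightarrow> nat \<Rightarrow> nat" where
  "swapXZ n k = (if k < n then k + n else k - n)"

(* symplectic-type product  bar(u) . v  (mod 2), as a boolean (True = 1) ;
   only indices < 2n are taken into account *)
definition sympl :: "nat \<Rightarrow> nat set \<Rightarrow> nat set \<Rightarrow> bool" where
  "sympl n u v = odd (card {k \<in> {0..<2*n}. k \<in> v \<and> swapXZ n k \<in> u})"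

definition xorsum :: "'b set \<Rightarrow> ('b \<Rightarrow> 'a set) \<Rightarrow> 'a set" where
  "xorsum I h = {k. odd (card {i \<in> I. k \<in> h i})}"

(* f^(i) = sum_j (G_C)_{j,i} g^(j),  G_C = [I_l A],  A :: l x (m-l) over F_2 (True = 1) *)
definition fvec :: "nat \<Rightarrow> (nat \<Rightarrow> nat set) \<Rightarrow> (nat \<Rightarrow> nat \<Rightarrow> bool) \<Rightarrow> nat \<Rightarrow> nat set" where
  "fvec l g A i = xorsum {j. j < l \<and> (if i < l then j = i else A j (i - l))} g"

definition syn :: "nat \<Rightarrow> nat \<Rightarrow> nat \<Rightarrow> (nat \<Rightarrow> nat set) \<Rightarrow> (nat \<Rightarrow> nat \<Rightarrow> bool)
                   \<Rightarrow> nat set \<Rightarrow> nat set" where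
  "syn n m l g A e = {i. i < m \<and> (sympl n e (fvec l g A i) \<noteq> (2*n + i \<in> e))}"

definition DeltaD :: "nat \<Rightarrow> nat \<Rightarrow> nat \<Rightarrow> (nat \<Rightarrow> nat set) \<Rightarrow> (nat \<Rightarrow> nat \<Rightarrow> bool)
                      \<Rightarrow> nat set set" where
  "DeltaD n m l g A = {\<gamma>. \<gamma> \<subseteq> {0..<2*n+m} \<and>
      (\<forall>e. e \<subseteq> \<gamma> \<longrightarrow> e \<noteq> {} \<longrightarrow> syn n m l g A e \<noteq> {})}"

(* quantum data-syndrome code data: generators g^(1..l) in F_2^{2n} pairwise commuting,
   classical generator matrix [I_l A] with l <= m *)
definition qds_code :: "nat \<Rightarrow> nat \<Rightarrow> nat \<Rightarrow> (nat \<Rightarrow> nat set) \<Rightarrow> (nat \<Rightarrow> nat \<Rightarrow> bool) \<Rightarrow> bool" where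
  "qds_code n m l g A \<longleftrightarrow> l \<le> m \<and> (\<forall>j<l. g j \<subseteq> {0..<2*n}) \<and>
      (\<forall>j<l. \<forall>j'<l. \<not> sympl n (g j) (g j'))"

definition channel_family :: "nat set set \<Rightarrow> (nat set \<Rightarrow> nat set \<Rightarrow> real) \<Rightarrow> bool" where
  "channel_family \<Gamma> P \<longleftrightarrow> (\<forall>\<gamma>\<in>\<Gamma>. (\<forall>e. 0 \<le> P \<gamma> e) \<and> (\<forall>e. \<not> e \<subseteq> \<gamma> \<longrightarrow> P \<gamma> e = 0)
      \<and> sum (P \<gamma>) (Pow \<gamma>) = 1)"

(* total error distribution: Boolean convolution of the independent channels *)
definition total_dist :: "nat set set \<Rightarrow> (nat set \<Rightarrow> nat set \<Rightarrow> real) \<Rightarrow> nat set \<Rightarrow> real" where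
  "total_dist \<Gamma> P e = (\<Sum>h \<in> PiE \<Gamma> Pow. if xorsum \<Gamma> h = e then (\<Prod>\<gamma>\<in>\<Gamma>. P \<gamma> (h \<gamma>)) else 0)"

definition syndrome_stat :: "nat \<Rightarrow> nat \<Rightarrow> nat \<Rightarrow> (nat \<Rightarrow> nat set) \<Rightarrow> (nat \<Rightarrow> nat \<Rightarrow> bool)
      \<Rightarrow> (nat set \<Rightarrow> real) \<Rightarrow> nat set \<Rightarrow> real" where
  "syndrome_stat n m l g A Q s = (\<Sum>e \<in> {e \<in> Pow {0..<2*n+m}. syn n m l g A e = s}. Q e)"

end

theory Submission
  imports Defs
begin

definition sdiff :: "'a set \<Rightarrow> 'a set \<Rightarrow> 'a set" where
  "sdiff a b = (a - b) \<union> (b - a)"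

lemma card_sd_parity:
  assumes "finite A" "finite B"
  shows "odd (card (sdiff A B)) \<longleftrightarrow> (odd (card A) \<noteq> odd (card B))"
proof -
  have d: "card (sdiff A B) = card (A - B) + card (B - A)"
    unfolding sdiff_def using assms by (intro card_Un_disjoint) auto
  have 1: "card (A - B) = card A - card (A \<inter> B)"
    using assms by (simp add: card_Diff_subset_Int)
  have 2: "card (B - A) = card B - card (A \<inter> B)"
    using assms by (simp add: card_Diff_subset_Int Int_commute)
  have 3: "card (A \<inter> B) \<le> card A" "card (A \<inter> B) \<le> card B"
    using assms by (auto intro: card_mono)
  show ?thesis unfolding d 1 2 using 3 by presburger
qed

definition chi :: "nat set \<Rightarrow> nat set \<Rightarrow> real" where
  "chi v e = (if odd (card (v \<inter> e)) then -1 else 1)"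

lemma chi_comm: "chi v e = chi e v"
  by (simp add: chi_def Int_commute)

lemma chi_empty[simp]: "chi v {} = 1"
  by (simp add: chi_def)

lemma chi_sq: "chi v e * chi v e = 1"
  by (simp add: chi_def)

lemma chi_sd:
  assumes "finite a" "finite b"
  shows "chi v (sdiff a b) = chi v a * chi v b"
proof -
  have "v \<inter> sdiff a b = sdiff (v \<inter> a) (v \<inter> b)" by (auto simp: sdiff_def)
  then have "odd (card (v \<inter> sdiff a b)) \<longleftrightarrow> (odd (card (v \<inter> a)) \<noteq> odd (card (v \<inter> b)))"
    using card_sd_parity[of "v \<inter> a" "v \<inter> b"] assms by simp
  then show ?thesis by (auto simp: chi_def)
qed

lemma orth:
  assumes "finite X" "t \<subseteq> X"
  shows "(\<Sum>s\<in>Pow X. chi s t) = (if t = {} then 2 ^ card X else 0)"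
proof (cases "t = {}")
  case True
  then show ?thesis using assms by (simp add: card_Pow)
next
  case False
  then obtain k where k: "k \<in> t" by auto
  have neg: "chi (sdiff s {k}) t = - chi s t" if "s \<in> Pow X" for s
  proof -
    have fs: "finite s" using that assms finite_subset by auto
    have "chi (sdiff s {k}) t = chi t (sdiff s {k})" by (rule chi_comm)
    also have "\<dots> = chi t s * chi t {k}" using fs by (simp add: chi_sd)
    also have "chi t {k} = -1" using k by (simp add: chi_def)
    finally show ?thesis by (simp add: chi_comm)
  qed
  have "(\<Sum>s\<in>Pow X. chi (sdiff s {k}) t) = (\<Sum>s\<in>Pow X. chi s t)"
    by (rule sum.reindex_bij_witness[where i="\<lambda>s. sdiff s {k}" and j="\<lambda>s. sdiff s {k}"])
       (use k assms in \<open>auto simp: sdiff_def\<close>)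
  then have "(\<Sum>s\<in>Pow X. chi s t) = - (\<Sum>s\<in>Pow X. chi s t)"
    using neg by (simp add: sum_negf)
  then show ?thesis using False by simp
qed

lemma inversion:
  fixes f :: "nat set \<Rightarrow> real"
  assumes "finite X" "y \<subseteq> X"
  shows "(\<Sum>T\<in>Pow X. (\<Sum>x\<in>Pow X. f x * chi T x) * chi T y) = 2 ^ card X * f y"
proof -
  have fy: "finite y" using assms finite_subset by auto
  have "(\<Sum>T\<in>Pow X. (\<Sum>x\<in>Pow X. f x * chi T x) * chi T y)
      = (\<Sum>T\<in>Pow X. \<Sum>x\<in>Pow X. f x * chi T (sdiff x y))"
  proof (rule sum.cong[OF refl])
    fix T assume "T \<in> Pow X"
    have "(\<Sum>x\<in>Pow X. f x * chi T x) * chi T y = (\<Sum>x\<in>Pow X. f x * (chi T x * chi T y))"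
      by (simp add: sum_distrib_right mult.assoc)
    also have "\<dots> = (\<Sum>x\<in>Pow X. f x * chi T (sdiff x y))"
    proof (rule sum.cong[OF refl])
      fix x assume "x \<in> Pow X"
      then have "finite x" using assms finite_subset by auto
      then show "f x * (chi T x * chi T y) = f x * chi T (sdiff x y)" using chi_sd[of x y T] fy by simp
    qed
    finally show "(\<Sum>x\<in>Pow X. f x * chi T x) * chi T y = (\<Sum>x\<in>Pow X. f x * chi T (sdiff x y))" .
  qed
  also have "\<dots> = (\<Sum>x\<in>Pow X. f x * (\<Sum>T\<in>Pow X. chi T (sdiff x y)))"
    by (subst sum.swap) (simp add: sum_distrib_left)
  also have "\<dots> = (\<Sum>x\<in>Pow X. if x = y then 2 ^ card X * f x else 0)"
  proof (rule sum.cong[OF refl])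
    fix x assume x: "x \<in> Pow X"
    have "sdiff x y \<subseteq> X" using x assms by (auto simp: sdiff_def)
    moreover have "sdiff x y = {} \<longleftrightarrow> x = y" by (auto simp: sdiff_def)
    ultimately show "f x * (\<Sum>T\<in>Pow X. chi T (sdiff x y)) = (if x = y then 2 ^ card X * f x else 0)"
      using orth[OF assms(1)] by auto
  qed
  also have "\<dots> = 2 ^ card X * f y" using assms by (simp add: sum.delta')
  finally show ?thesis .
qed

lemma sympl_sd: "sympl n (sdiff u u') v = (sympl n u v \<noteq> sympl n u' v)"
proof -
  have "{k \<in> {0..<2*n}. k \<in> v \<and> swapXZ n k \<in> sdiff u u'}
     = sdiff {k \<in> {0..<2*n}. k \<in> v \<and> swapXZ n k \<in> u} {k \<in> {0..<2*n}. k \<in> v \<and> swapXZ n k \<in> u'}"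
    by (auto simp: sdiff_def)
  then show ?thesis unfolding sympl_def by (simp add: card_sd_parity)
qed

lemma syn_sd: "syn n m l g A (sdiff e e') = sdiff (syn n m l g A e) (syn n m l g A e')"
  unfolding syn_def sympl_sd by (auto simp: sdiff_def)

lemma syn_empty[simp]: "syn n m l g A {} = {}"
  by (simp add: syn_def sympl_def)

lemma syn_sub: "syn n m l g A e \<subseteq> {0..<m}"
  by (auto simp: syn_def)

lemma lin_rep:
  assumes U: "finite U"
    and add: "\<And>a b. a \<subseteq> U \<Longrightarrow> b \<subseteq> U \<Longrightarrow> L (sdiff a b) = (L a \<noteq> L b)"
  shows "\<forall>e. e \<subseteq> U \<longrightarrow> L e = odd (card ({k\<in>U. L {k}} \<inter> e))"
proof -
  have L0: "\<not> L {}" using add[of "{}" "{}"] by (simp add: sdiff_def)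
  have "finite e \<Longrightarrow> e \<subseteq> U \<Longrightarrow> L e = odd (card ({k\<in>U. L {k}} \<inter> e))" for e
  proof (induction e rule: finite_induct)
    case empty
    then show ?case using L0 by simp
  next
    case (insert k F)
    have "insert k F = sdiff {k} F" using insert by (auto simp: sdiff_def)
    moreover have "{k} \<subseteq> U" "F \<subseteq> U" using insert.prems by auto
    ultimately have "L (insert k F) = (L {k} \<noteq> L F)" using add[of "{k}" F] by simp
    moreover have "L F = odd (card ({j\<in>U. L {j}} \<inter> F))" using insert by simp
    moreover have "{j\<in>U. L {j}} \<inter> insert k F = (if L {k} then insert k ({j\<in>U. L {j}} \<inter> F) else {j\<in>U. L {j}} \<inter> F)"
      using insert by auto
    moreover have "finite ({j\<in>U. L {j}} \<inter> F)" using insert by simp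
    moreover have "k \<notin> {j\<in>U. L {j}} \<inter> F" using insert by simp
    ultimately show ?case by (simp only: split: if_split) simp
  qed
  then show ?thesis using U finite_subset by blast
qed

lemma syn_rep:
  assumes "finite U"
  shows "\<exists>w. \<forall>e. e \<subseteq> U \<longrightarrow> chi s (syn n m l g A e) = chi w e"
proof -
  define L where "L e = odd (card (s \<inter> syn n m l g A e))" for e
  have fs: "finite (syn n m l g A e)" for e by (rule finite_subset[OF syn_sub]) simp
  have "L (sdiff a b) = (L a \<noteq> L b)" for a b
  proof -
    have "s \<inter> syn n m l g A (sdiff a b) = sdiff (s \<inter> syn n m l g A a) (s \<inter> syn n m l g A b)"
      unfolding syn_sd by (auto simp: sdiff_def)
    then show ?thesis unfolding L_def using card_sd_parity[of "s \<inter> syn n m l g A a" "s \<inter> syn n m l g A b"] fs by simp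
  qed
  then have "\<forall>e. e \<subseteq> U \<longrightarrow> L e = odd (card ({k\<in>U. L {k}} \<inter> e))"
    using lin_rep[OF assms] by simp
  then have "\<forall>e. e \<subseteq> U \<longrightarrow> chi s (syn n m l g A e) = chi {k\<in>U. L {k}} e"
    unfolding chi_def L_def by simp
  then show ?thesis by blast
qed

lemma xorsum_insert:
  assumes "finite I" "a \<notin> I"
  shows "xorsum (insert a I) h = sdiff (h a) (xorsum I h)"
proof -
  have "odd (card {i \<in> insert a I. k \<in> h i}) \<longleftrightarrow> (k \<in> h a) \<noteq> odd (card {i \<in> I. k \<in> h i})" for k
  proof -
    have "{i \<in> insert a I. k \<in> h i} = (if k \<in> h a then insert a {i \<in> I. k \<in> h i} else {i \<in> I. k \<in> h i})"
      by auto
    then show ?thesis using assms by auto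
  qed
  then show ?thesis unfolding xorsum_def sdiff_def by auto
qed

lemma xorsum_sub: "xorsum I h \<subseteq> \<Union> (h ` I)"
proof
  fix k assume "k \<in> xorsum I h"
  then have "odd (card {i \<in> I. k \<in> h i})" unfolding xorsum_def by simp
  then have "card {i \<in> I. k \<in> h i} \<noteq> 0" by (metis even_zero)
  then obtain i where "i \<in> I" "k \<in> h i" by (metis (no_types, lifting) card.empty empty_Collect_eq)
  then show "k \<in> \<Union> (h ` I)" by auto
qed

lemma chi_xorsum:
  assumes "finite I" "\<forall>i\<in>I. finite (h i)"
  shows "chi v (xorsum I h) = (\<Prod>i\<in>I. chi v (h i))"
  using assms
proof (induction I rule: finite_induct)
  case empty
  then show ?case by (simp add: xorsum_def)
next
  case (insert a F)
  have "finite (xorsum F h)" using insert xorsum_sub[of F h] finite_subset by fastforce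
  then show ?case using insert by (simp add: xorsum_insert chi_sd)
qed

lemma PiE_sub: "h \<in> PiE \<Gamma> Pow \<Longrightarrow> \<Gamma> \<subseteq> Pow U \<Longrightarrow> xorsum \<Gamma> h \<subseteq> U"
proof -
  assume h: "h \<in> PiE \<Gamma> Pow" and G: "\<Gamma> \<subseteq> Pow U"
  have hs: "\<forall>\<gamma>\<in>\<Gamma>. h \<gamma> \<subseteq> \<gamma>" using h by (simp add: PiE_iff)
  have "\<Union>(h ` \<Gamma>) \<subseteq> U" using hs G by blast
  then show ?thesis using xorsum_sub[of \<Gamma> h] by (rule order_trans[rotated])
qed

lemma total_out:
  assumes "\<Gamma> \<subseteq> Pow U" "\<not> e \<subseteq> U"
  shows "total_dist \<Gamma> P e = 0"
proof -
  have "\<forall>h\<in>PiE \<Gamma> Pow. (if xorsum \<Gamma> h = e then \<Prod>\<gamma>\<in>\<Gamma>. P \<gamma> (h \<gamma>) else 0) = 0"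
  proof
    fix h assume h: "h \<in> PiE \<Gamma> Pow"
    have "xorsum \<Gamma> h \<noteq> e" using PiE_sub[OF h assms(1)] assms(2) by blast
    then show "(if xorsum \<Gamma> h = e then \<Prod>\<gamma>\<in>\<Gamma>. P \<gamma> (h \<gamma>) else 0) = 0" by simp
  qed
  then show ?thesis unfolding total_dist_def by (rule sum.neutral)
qed

lemma conv:
  assumes fG: "finite \<Gamma>" and GU: "\<Gamma> \<subseteq> Pow U" and fU: "finite U"
  shows "(\<Sum>e\<in>Pow U. total_dist \<Gamma> P e * chi v e) = (\<Prod>\<gamma>\<in>\<Gamma>. \<Sum>x\<in>Pow \<gamma>. P \<gamma> x * chi v x)"
proof -
  have fin: "\<gamma> \<in> \<Gamma> \<Longrightarrow> finite \<gamma>" for \<gamma> using GU fU by (meson Pow_iff finite_subset subsetD)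
  have xs: "xorsum \<Gamma> h \<in> Pow U" if "h \<in> PiE \<Gamma> Pow" for h
    using PiE_sub[OF that GU] by simp
  have "(\<Sum>e\<in>Pow U. total_dist \<Gamma> P e * chi v e)
      = (\<Sum>e\<in>Pow U. \<Sum>h\<in>PiE \<Gamma> Pow. (if xorsum \<Gamma> h = e then (\<Prod>\<gamma>\<in>\<Gamma>. P \<gamma> (h \<gamma>)) * chi v e else 0))"
    unfolding total_dist_def sum_distrib_right by (intro sum.cong refl) auto
  also have "\<dots> = (\<Sum>h\<in>PiE \<Gamma> Pow. \<Sum>e\<in>Pow U. (if xorsum \<Gamma> h = e then (\<Prod>\<gamma>\<in>\<Gamma>. P \<gamma> (h \<gamma>)) * chi v e else 0))"
    by (rule sum.swap)
  also have "\<dots> = (\<Sum>h\<in>PiE \<Gamma> Pow. (\<Prod>\<gamma>\<in>\<Gamma>. P \<gamma> (h \<gamma>)) * chi v (xorsum \<Gamma> h))"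
    using xs fU by (intro sum.cong refl) (simp add: sum.delta)
  also have "\<dots> = (\<Sum>h\<in>PiE \<Gamma> Pow. \<Prod>\<gamma>\<in>\<Gamma>. P \<gamma> (h \<gamma>) * chi v (h \<gamma>))"
  proof (intro sum.cong refl)
    fix h assume h: "h \<in> PiE \<Gamma> Pow"
    have hs: "\<forall>\<gamma>\<in>\<Gamma>. h \<gamma> \<subseteq> \<gamma>" using h by (simp add: PiE_iff)
    have "\<forall>i\<in>\<Gamma>. finite (h i)" using hs fin finite_subset by blast
    then show "(\<Prod>\<gamma>\<in>\<Gamma>. P \<gamma> (h \<gamma>)) * chi v (xorsum \<Gamma> h) = (\<Prod>\<gamma>\<in>\<Gamma>. P \<gamma> (h \<gamma>) * chi v (h \<gamma>))"
      using chi_xorsum[OF fG] by (simp add: prod.distrib)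
  qed
  also have "\<dots> = (\<Prod>\<gamma>\<in>\<Gamma>. \<Sum>x\<in>Pow \<gamma>. P \<gamma> x * chi v x)"
    by (rule prod_sum_PiE[symmetric]) (use fG fin in auto)
  finally show ?thesis .
qed

lemma FP_pos:
  assumes "channel_family \<Gamma> P" "\<gamma> \<in> \<Gamma>" "P \<gamma> {} > 1/2" "finite \<gamma>"
  shows "(\<Sum>x\<in>Pow \<gamma>. P \<gamma> x * chi v x) > 0"
proof -
  have nn: "\<And>e. 0 \<le> P \<gamma> e" and s1: "sum (P \<gamma>) (Pow \<gamma>) = 1"
    using assms(1,2) unfolding channel_family_def by auto
  have fp: "finite (Pow \<gamma>)" using assms(4) by simp
  have e: "{} \<in> Pow \<gamma>" by simp
  have "(\<Sum>x\<in>Pow \<gamma>. P \<gamma> x * chi v x) = P \<gamma> {} + (\<Sum>x\<in>Pow \<gamma> - {{}}. P \<gamma> x * chi v x)"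
    by (subst sum.remove[OF fp e]) simp
  moreover have "(\<Sum>x\<in>Pow \<gamma> - {{}}. P \<gamma> x * chi v x) \<ge> (\<Sum>x\<in>Pow \<gamma> - {{}}. - P \<gamma> x)"
    using nn by (intro sum_mono) (auto simp: chi_def)
  moreover have "(\<Sum>x\<in>Pow \<gamma> - {{}}. P \<gamma> x) = 1 - P \<gamma> {}"
    using sum.remove[OF fp e, of "P \<gamma>"] s1 by simp
  ultimately show ?thesis using assms(3) by (simp add: sum_negf)
qed

lemma stat_lemma:
  "(\<Sum>t\<in>Pow {0..<m}. syndrome_stat n m l g A Q t * chi s t)
   = (\<Sum>e\<in>Pow {0..<2*n+m}. Q e * chi s (syn n m l g A e))"
proof -
  have "(\<Sum>t\<in>Pow {0..<m}. syndrome_stat n m l g A Q t * chi s t)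
      = (\<Sum>t\<in>Pow {0..<m}. \<Sum>e\<in>Pow {0..<2*n+m}. if syn n m l g A e = t then Q e * chi s t else 0)"
  proof (intro sum.cong refl)
    fix t
    have "syndrome_stat n m l g A Q t = (\<Sum>e\<in>Pow {0..<2*n+m}. if syn n m l g A e = t then Q e else 0)"
      unfolding syndrome_stat_def by (rule sum.inter_filter) simp
    then show "syndrome_stat n m l g A Q t * chi s t = (\<Sum>e\<in>Pow {0..<2*n+m}. if syn n m l g A e = t then Q e * chi s t else 0)"
      by (auto simp: sum_distrib_right intro!: sum.cong)
  qed
  also have "\<dots> = (\<Sum>e\<in>Pow {0..<2*n+m}. \<Sum>t\<in>Pow {0..<m}. if syn n m l g A e = t then Q e * chi s t else 0)"
    by (rule sum.swap)
  also have "\<dots> = (\<Sum>e\<in>Pow {0..<2*n+m}. Q e * chi s (syn n m l g A e))"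
    using syn_sub by (intro sum.cong refl) (simp add: sum.delta)
  finally show ?thesis .
qed

theorem theorem10:
  fixes n m l :: nat and g :: "nat \<Rightarrow> nat set" and A :: "nat \<Rightarrow> nat \<Rightarrow> bool"
    and \<Gamma> :: "nat set set" and P P' :: "nat set \<Rightarrow> nat set \<Rightarrow> real"
  assumes code: "qds_code n m l g A"
    and Gamma: "\<Gamma> \<subseteq> Pow {0..<2*n+m}"
    and P: "channel_family \<Gamma> P"
    and union: "\<forall>\<gamma>1\<in>\<Gamma>. \<forall>\<gamma>2\<in>\<Gamma>. \<gamma>1 \<union> \<gamma>2 \<in> DeltaD n m l g A"
    and P0: "\<forall>\<gamma>\<in>\<Gamma>. P \<gamma> {} > 1/2"
    and P': "channel_family \<Gamma> P'"
    and P'0: "\<forall>\<gamma>\<in>\<Gamma>. P' \<gamma> {} > 1/2"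
    and same: "\<forall>s. syndrome_stat n m l g A (total_dist \<Gamma> P') s
                    = syndrome_stat n m l g A (total_dist \<Gamma> P) s"
  shows "total_dist \<Gamma> P' = total_dist \<Gamma> P"
proof -
  define U where "U = {0..<2*n+m}"
  have fU: "finite U" by (simp add: U_def)
  have GU: "\<Gamma> \<subseteq> Pow U" using Gamma by (simp add: U_def)
  have fG: "finite \<Gamma>" using GU fU by (meson finite_Pow_iff finite_subset)
  have fing: "finite \<gamma>" if "\<gamma> \<in> \<Gamma>" for \<gamma> using GU fU that by (meson Pow_iff finite_subset subsetD)
  define FP where "FP Q \<gamma> v = (\<Sum>x\<in>Pow \<gamma>. Q \<gamma> x * chi v x)" for Q :: "nat set \<Rightarrow> nat set \<Rightarrow> real" and \<gamma> v
  have posP: "FP P \<gamma> v > 0" if "\<gamma> \<in> \<Gamma>" for \<gamma> v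
    unfolding FP_def using FP_pos[OF P that _ fing[OF that]] P0 that by blast
  have posP': "FP P' \<gamma> v > 0" if "\<gamma> \<in> \<Gamma>" for \<gamma> v
    unfolding FP_def using FP_pos[OF P' that _ fing[OF that]] P'0 that by blast
  have convP: "(\<Sum>e\<in>Pow U. total_dist \<Gamma> P e * chi v e) = (\<Prod>\<gamma>\<in>\<Gamma>. FP P \<gamma> v)" for v
    unfolding FP_def by (rule conv[OF fG GU fU])
  have convP': "(\<Sum>e\<in>Pow U. total_dist \<Gamma> P' e * chi v e) = (\<Prod>\<gamma>\<in>\<Gamma>. FP P' \<gamma> v)" for v
    unfolding FP_def by (rule conv[OF fG GU fU])
  have "\<forall>s. \<exists>w. \<forall>e. e \<subseteq> U \<longrightarrow> chi s (syn n m l g A e) = chi w e"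
    using syn_rep[OF fU] by blast
  from choice[OF this] obtain W where W: "\<And>s e. e \<subseteq> U \<Longrightarrow> chi s (syn n m l g A e) = chi (W s) e"
    by blast
  have FW: "(\<Sum>e\<in>Pow U. Q e * chi (W s) e) = (\<Sum>t\<in>Pow {0..<m}. syndrome_stat n m l g A Q t * chi s t)" for Q s
    unfolding stat_lemma U_def[symmetric] using W by (intro sum.cong refl) simp
  have prodW: "(\<Prod>\<gamma>\<in>\<Gamma>. FP P \<gamma> (W s)) = (\<Prod>\<gamma>\<in>\<Gamma>. FP P' \<gamma> (W s))" for s
    using convP[of "W s"] convP'[of "W s"] FW[of "total_dist \<Gamma> P" s] FW[of "total_dist \<Gamma> P'" s] same
    by simp
  define psi where "psi \<gamma> v = ln (FP P \<gamma> v) - ln (FP P' \<gamma> v)" for \<gamma> v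
  define G where "G v = (\<Sum>\<gamma>\<in>\<Gamma>. psi \<gamma> v)" for v
  have G0: "G (W s) = 0" for s
  proof -
    have "(\<Sum>\<gamma>\<in>\<Gamma>. ln (FP P \<gamma> (W s))) = ln (\<Prod>\<gamma>\<in>\<Gamma>. FP P \<gamma> (W s))"
      using posP by (intro ln_prod[OF fG, symmetric]) (metis less_irrefl)
    also have "\<dots> = ln (\<Prod>\<gamma>\<in>\<Gamma>. FP P' \<gamma> (W s))" using prodW by simp
    also have "\<dots> = (\<Sum>\<gamma>\<in>\<Gamma>. ln (FP P' \<gamma> (W s)))"
      using posP' by (intro ln_prod[OF fG]) (metis less_irrefl)
    finally show ?thesis by (simp add: G_def psi_def sum_subtractf)
  qed
  have loc: "psi \<gamma> (v \<inter> \<gamma>) = psi \<gamma> v" for \<gamma> v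
  proof -
    have "FP Q \<gamma> (v \<inter> \<gamma>) = FP Q \<gamma> v" for Q
      unfolding FP_def
    proof (intro sum.cong refl)
      fix x assume "x \<in> Pow \<gamma>"
      then have "v \<inter> \<gamma> \<inter> x = v \<inter> x" by blast
      then show "Q \<gamma> x * chi (v \<inter> \<gamma>) x = Q \<gamma> x * chi v x" by (simp add: chi_def)
    qed
    then show ?thesis by (simp add: psi_def)
  qed
  define a where "a \<gamma> T = (\<Sum>x\<in>Pow \<gamma>. psi \<gamma> x * chi T x) / 2 ^ card \<gamma>" for \<gamma> T
  have expand: "psi \<gamma> v = (\<Sum>T\<in>Pow \<gamma>. a \<gamma> T * chi T v)" if "\<gamma> \<in> \<Gamma>" for \<gamma> v
  proof -
    have "(\<Sum>T\<in>Pow \<gamma>. a \<gamma> T * chi T v)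
        = (\<Sum>T\<in>Pow \<gamma>. (\<Sum>x\<in>Pow \<gamma>. psi \<gamma> x * chi T x) * chi T (v \<inter> \<gamma>) / 2 ^ card \<gamma>)"
    proof (intro sum.cong refl)
      fix T assume "T \<in> Pow \<gamma>"
      then have "T \<inter> (v \<inter> \<gamma>) = T \<inter> v" by blast
      then have "chi T (v \<inter> \<gamma>) = chi T v" by (simp add: chi_def)
      then show "a \<gamma> T * chi T v
          = (\<Sum>x\<in>Pow \<gamma>. psi \<gamma> x * chi T x) * chi T (v \<inter> \<gamma>) / 2 ^ card \<gamma>" by (simp add: a_def)
    qed
    also have "\<dots> = (\<Sum>T\<in>Pow \<gamma>. (\<Sum>x\<in>Pow \<gamma>. psi \<gamma> x * chi T x) * chi T (v \<inter> \<gamma>)) / 2 ^ card \<gamma>"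
      by (simp add: sum_divide_distrib)
    also have "\<dots> = psi \<gamma> (v \<inter> \<gamma>)"
      using inversion[OF fing[OF that], of "v \<inter> \<gamma>" "psi \<gamma>"] by simp
    finally show ?thesis using loc by simp
  qed
  define TT where "TT = \<Union>(Pow ` \<Gamma>)"
  have fTT: "finite TT" unfolding TT_def using fG fing by auto
  define B where "B T = (\<Sum>\<gamma>\<in>\<Gamma>. if T \<subseteq> \<gamma> then a \<gamma> T else 0)" for T
  have Gexp: "G v = (\<Sum>T\<in>TT. B T * chi T v)" for v
  proof -
    have "G v = (\<Sum>\<gamma>\<in>\<Gamma>. \<Sum>T\<in>Pow \<gamma>. a \<gamma> T * chi T v)"
      unfolding G_def using expand by (intro sum.cong refl) simp
    also have "\<dots> = (\<Sum>\<gamma>\<in>\<Gamma>. \<Sum>T\<in>TT. if T \<subseteq> \<gamma> then a \<gamma> T * chi T v else 0)"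
    proof (rule sum.cong[OF refl])
      fix \<gamma> assume "\<gamma> \<in> \<Gamma>"
      then have "{T \<in> TT. T \<subseteq> \<gamma>} = Pow \<gamma>" unfolding TT_def by auto
      then show "(\<Sum>T\<in>Pow \<gamma>. a \<gamma> T * chi T v) = (\<Sum>T\<in>TT. if T \<subseteq> \<gamma> then a \<gamma> T * chi T v else 0)"
        using sum.inter_filter[OF fTT, of "\<lambda>T. a \<gamma> T * chi T v" "\<lambda>T. T \<subseteq> \<gamma>"] by simp
    qed
    also have "\<dots> = (\<Sum>T\<in>TT. \<Sum>\<gamma>\<in>\<Gamma>. if T \<subseteq> \<gamma> then a \<gamma> T * chi T v else 0)"
      by (rule sum.swap)
    also have "\<dots> = (\<Sum>T\<in>TT. B T * chi T v)"
      unfolding B_def sum_distrib_right by (intro sum.cong refl) auto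
    finally show ?thesis .
  qed
  have orth2: "(\<Sum>s\<in>Pow {0..<m}. chi T (W s) * chi T0 (W s)) = (if T = T0 then 2 ^ m else 0)"
    if T: "T \<in> TT" and T0: "T0 \<in> TT" for T T0
  proof -
    obtain \<gamma>1 where g1: "\<gamma>1 \<in> \<Gamma>" "T \<subseteq> \<gamma>1" using T unfolding TT_def by auto
    obtain \<gamma>2 where g2: "\<gamma>2 \<in> \<Gamma>" "T0 \<subseteq> \<gamma>2" using T0 unfolding TT_def by auto
    define D where "D = sdiff T T0"
    have fT: "finite T" "finite T0" using g1 g2 fing finite_subset by blast+
    have DU: "D \<subseteq> \<gamma>1 \<union> \<gamma>2" using g1 g2 by (auto simp: D_def sdiff_def)
    have DU2: "D \<subseteq> U" using DU g1 g2 GU by blast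
    have "chi T (W s) * chi T0 (W s) = chi s (syn n m l g A D)" for s
    proof -
      have "chi T (W s) * chi T0 (W s) = chi (W s) D"
        using chi_sd[OF fT, of "W s"] by (simp add: chi_comm D_def)
      also have "\<dots> = chi s (syn n m l g A D)" using W[OF DU2] by simp
      finally show ?thesis .
    qed
    then have "(\<Sum>s\<in>Pow {0..<m}. chi T (W s) * chi T0 (W s))
        = (if syn n m l g A D = {} then 2 ^ m else 0)"
      using orth[of "{0..<m}" "syn n m l g A D"] syn_sub[of n m l g A D] by simp
    moreover have "syn n m l g A D = {} \<longleftrightarrow> T = T0"
    proof
      assume "T = T0" then show "syn n m l g A D = {}" by (simp add: D_def sdiff_def)
    next
      assume s0: "syn n m l g A D = {}"
      have "\<gamma>1 \<union> \<gamma>2 \<in> DeltaD n m l g A" using union g1 g2 by blast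
      then have "D = {}" using DU s0 unfolding DeltaD_def by blast
      then show "T = T0" by (auto simp: D_def sdiff_def)
    qed
    ultimately show ?thesis by simp
  qed
  have B0: "B T0 = 0" if T0: "T0 \<in> TT" for T0
  proof -
    have "0 = (\<Sum>s\<in>Pow {0..<m}. chi T0 (W s) * G (W s))" using G0 by simp
    also have "\<dots> = (\<Sum>s\<in>Pow {0..<m}. \<Sum>T\<in>TT. B T * (chi T (W s) * chi T0 (W s)))"
      unfolding Gexp sum_distrib_left by (intro sum.cong refl) (simp add: algebra_simps)
    also have "\<dots> = (\<Sum>T\<in>TT. B T * (\<Sum>s\<in>Pow {0..<m}. chi T (W s) * chi T0 (W s)))"
      unfolding sum_distrib_left by (rule sum.swap)
    also have "\<dots> = (\<Sum>T\<in>TT. B T * (if T = T0 then 2 ^ m else 0))"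
      using orth2 T0 by (intro sum.cong refl) simp
    also have "\<dots> = (\<Sum>T\<in>TT. if T = T0 then B T * 2 ^ m else 0)"
      by (rule sum.cong[OF refl]) simp
    also have "\<dots> = B T0 * 2 ^ m" using T0 fTT by (simp add: sum.delta)
    finally show ?thesis by simp
  qed
  have Gz: "G v = 0" for v using Gexp B0 by simp
  have prodeq: "(\<Prod>\<gamma>\<in>\<Gamma>. FP P \<gamma> v) = (\<Prod>\<gamma>\<in>\<Gamma>. FP P' \<gamma> v)" for v
  proof -
    have s: "(\<Sum>\<gamma>\<in>\<Gamma>. ln (FP P \<gamma> v)) = (\<Sum>\<gamma>\<in>\<Gamma>. ln (FP P' \<gamma> v))"
      using Gz[of v] by (simp add: G_def psi_def sum_subtractf)
    have "(\<Prod>\<gamma>\<in>\<Gamma>. FP P \<gamma> v) = (\<Prod>\<gamma>\<in>\<Gamma>. exp (ln (FP P \<gamma> v)))"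
      using posP by (intro prod.cong refl) simp
    also have "\<dots> = exp (\<Sum>\<gamma>\<in>\<Gamma>. ln (FP P \<gamma> v))" by (rule exp_sum[OF fG, symmetric])
    also have "\<dots> = exp (\<Sum>\<gamma>\<in>\<Gamma>. ln (FP P' \<gamma> v))" using s by simp
    also have "\<dots> = (\<Prod>\<gamma>\<in>\<Gamma>. exp (ln (FP P' \<gamma> v)))" by (rule exp_sum[OF fG])
    also have "\<dots> = (\<Prod>\<gamma>\<in>\<Gamma>. FP P' \<gamma> v)"
      using posP' by (intro prod.cong refl) simp
    finally show ?thesis .
  qed
  have fourier: "(\<Sum>e\<in>Pow U. total_dist \<Gamma> P e * chi T e) = (\<Sum>e\<in>Pow U. total_dist \<Gamma> P' e * chi T e)" for T
    using convP convP' prodeq by simp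
  show ?thesis
  proof (rule ext)
    fix e
    show "total_dist \<Gamma> P' e = total_dist \<Gamma> P e"
    proof (cases "e \<subseteq> U")
      case True
      have "2 ^ card U * total_dist \<Gamma> P e = 2 ^ card U * total_dist \<Gamma> P' e"
        using inversion[OF fU True, of "total_dist \<Gamma> P"] inversion[OF fU True, of "total_dist \<Gamma> P'"] fourier
        by simp
      then show ?thesis by simp
    next
      case False
      then show ?thesis using total_out[OF GU] by simp
    qed
  qed
qed

end
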